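(* Let $\alpha>2$, let $K>0$ be a constant not depending on $\beta$, and let $\beta_{\min}>0$. Consider maximizing over $\beta\ge\beta_{\min}$ the (reduced) area spectral efficiency $$\mathcal{A}(\beta)=\ln(1+\beta)\,\beta^{-2/\alpha}\exp\left(-K\beta^{2/\alpha}\right).$$ Then the optimal decoding target is $\beta^*=\max(\beta_0,\beta_{\min})$, where $\beta_0>0$ satisfies $$-2K\beta_0^{2/\alpha}\ln(1+\beta_0)+\frac{\alpha\beta_0}{1+\beta_0}-2\ln(1+\beta_0)=0.$$
   Context: In the paper, $K=\int_{[s-d]^+}^{\infty}c_0(y,s)\,dy$, where $d$ is the secondary TX–RX distance, $s>0$ is a constant (arising from a mean-value decomposition of the ASE integral) treated as independent of $\beta$, and $c_0(y,s)=\frac{2\lambda_1P_1d^{\alpha}y^{-\alpha+1}}{P_2+P_1d^{\alpha}y^{-\alpha}}\arccos\left(\frac{s^2-d^2-y^2}{2dy}\right)$ if $|s-d|<y\le s+d$ and $c_0(y,s)=\frac{2\pi\lambda_1P_1d^{\alpha}y^{-\alpha+1}}{P_2+P_1d^{\alpha}y^{-\alpha}}$ otherwise ($\lambda_1$ primary density, $P_1,P_2$ transmit powers). $\beta_{\min}$ is the minimum decoding target guaranteeing primary protection. The function $\mathcal{A}$ is the secondary area spectral efficiency after removing factors independent of $\beta$. *)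

theory Defs
  imports Complex_Main
begin

definition ASE :: "real \<Rightarrow> real \<Rightarrow> real \<Rightarrow> real" where
  "ASE \<alpha> K \<beta> = ln (1 + \<beta>) * \<beta> powr (- 2 / \<alpha>) * exp (- K * \<beta> powr (2 / \<alpha>))"

end

theory Submission
  imports Defs
begin

lemma ASE_deriv:
  fixes \<alpha> K x :: real
  assumes "\<alpha> > 2" "x > 0"
  shows "(ASE \<alpha> K has_real_derivative
     exp (- K * x powr (2/\<alpha>)) * x powr (- 2/\<alpha>) / (x * \<alpha>) *
     (\<alpha> * x / (1 + x) - 2 * ln (1 + x) - 2 * K * x powr (2/\<alpha>) * ln (1 + x))) (at x)"
proof -
  define a where "a = 2/\<alpha>"
  have a\<alpha>: "a * \<alpha> = 2" using assms by (simp add: a_def)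
  have m: "- 2 / \<alpha> = - a" by (simp add: a_def)
  define E where "E = exp (- K * x powr a)"
  have d1: "((\<lambda>x. ln (1 + x)) has_real_derivative 1/(1+x)) (at x)"
    using assms by (auto intro!: derivative_eq_intros)
  have d2: "((\<lambda>x. x powr (-a)) has_real_derivative (-a) * x powr (-a - 1)) (at x)"
    using has_real_derivative_powr[OF assms(2), of "-a"] by simp
  have d3: "((\<lambda>x. exp (- K * x powr a)) has_real_derivative E * (- K * (a * x powr (a - 1)))) (at x)"
    unfolding E_def
    by (rule DERIV_fun_exp, rule DERIV_cmult, rule has_real_derivative_powr[OF assms(2)])
  have "(ASE \<alpha> K has_real_derivative
     (1/(1+x) * x powr (-a) + ln (1+x) * ((-a) * x powr (-a - 1))) * E
     + ln (1+x) * x powr (-a) * (E * (- K * (a * x powr (a - 1))))) (at x)"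
    unfolding ASE_def m a_def[symmetric] E_def
    using DERIV_mult[OF DERIV_mult[OF d1 d2] d3] by (simp add: E_def mult_ac)
  moreover have "(1/(1+x) * x powr (-a) + ln (1+x) * ((-a) * x powr (-a - 1))) * E
     + ln (1+x) * x powr (-a) * (E * (- K * (a * x powr (a - 1)))) =
     E * x powr (- a) / (x * \<alpha>) *
     (\<alpha> * x / (1 + x) - 2 * ln (1 + x) - 2 * K * x powr a * ln (1 + x))"
  proof -
    have p1: "x powr (-a - 1) = x powr (-a) / x" using assms by (simp add: powr_diff)
    have p2: "x powr (a - 1) = x powr a / x" using assms by (simp add: powr_diff)
    have g: "\<And>E P Q l. (1/(1+x) * P + l * ((-a) * (P / x))) * E
     + l * P * (E * (- K * (a * (Q / x)))) =
     E * P / (x * \<alpha>) * (\<alpha> * x / (1 + x) - (a * \<alpha>) * l - (a * \<alpha>) * K * Q * l)"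
      using assms apply (simp add: divide_simps)
      by (simp add: algebra_simps)
    show ?thesis unfolding p1 p2 a\<alpha>[symmetric] g by (simp add: mult_ac)
  qed
  ultimately show ?thesis by (simp add: a_def E_def)
qed

lemma f_mono:
  fixes x y :: real
  assumes "0 < x" "x < y"
  shows "(1+x) * ln (1+x) / x < (1+y) * ln (1+y) / y"
proof -
  have "\<And>z. x \<le> z \<Longrightarrow> z \<le> y \<Longrightarrow> isCont (\<lambda>z. (1+z) * ln (1+z) / z) z"
    using assms by (auto intro!: continuous_intros)
  then have c: "continuous_on {x..y} (\<lambda>z. (1+z) * ln (1+z) / z)"
    by (simp add: continuous_at_imp_continuous_on)
  show ?thesis
  proof (rule DERIV_pos_imp_increasing_open[OF assms(2) _ c])
    fix z assume z: "x < z" "z < y"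
    then have zp: "z > 0" using assms by simp
    have "((\<lambda>z. (1+z) * ln (1+z) / z) has_real_derivative
        ((1 * ln (1+z) + (1+z) * (1/(1+z))) * z - (1+z) * ln (1+z) * 1) / (z*z)) (at z)"
      using zp by (auto intro!: derivative_eq_intros)
    moreover have "((1 * ln (1+z) + (1+z) * (1/(1+z))) * z - (1+z) * ln (1+z) * 1) / (z*z)
       = (z - ln (1+z)) / (z*z)" using zp by (simp add: field_simps)
    moreover have "(z - ln (1+z)) / (z*z) > 0"
      using ln_add_one_self_less_self[OF zp] zp by simp
    ultimately show "\<exists>d. ((\<lambda>z. (1+z) * ln (1+z) / z) has_real_derivative d) (at z) \<and> d > 0"
      by metis
  qed
qed

lemma q_mono:
  fixes \<alpha> K x y :: real
  assumes "\<alpha> > 2" "K > 0" "0 < x" "x < y"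
  shows "\<alpha> * y / ((1+y) * ln (1+y)) - 2 - 2 * K * y powr (2/\<alpha>)
       < \<alpha> * x / ((1+x) * ln (1+x)) - 2 - 2 * K * x powr (2/\<alpha>)"
proof -
  have lx: "ln (1+x) > 0" "ln (1+y) > 0" using assms by auto
  have "(1+x) * ln (1+x) / x < (1+y) * ln (1+y) / y" by (rule f_mono) (use assms in auto)
  then have "y / ((1+y) * ln (1+y)) < x / ((1+x) * ln (1+x))"
    using lx assms by (simp add: divide_simps mult_ac)
  then have A: "\<alpha> * y / ((1+y) * ln (1+y)) < \<alpha> * x / ((1+x) * ln (1+x))"
    using assms by (simp add: divide_simps)
  have "x powr (2/\<alpha>) < y powr (2/\<alpha>)"
    using assms by (intro powr_less_mono2) auto
  then have "2 * K * x powr (2/\<alpha>) < 2 * K * y powr (2/\<alpha>)" using assms by simp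
  with A show ?thesis by linarith
qed

lemma h_sign:
  fixes \<alpha> K \<beta>0 x :: real
  assumes "\<alpha> > 2" "K > 0" "\<beta>0 > 0" "x > 0"
    and h0: "- 2 * K * \<beta>0 powr (2 / \<alpha>) * ln (1 + \<beta>0) + \<alpha> * \<beta>0 / (1 + \<beta>0)
           - 2 * ln (1 + \<beta>0) = 0"
  shows "x < \<beta>0 \<Longrightarrow> \<alpha> * x / (1 + x) - 2 * ln (1 + x) - 2 * K * x powr (2/\<alpha>) * ln (1 + x) > 0"
    and "x > \<beta>0 \<Longrightarrow> \<alpha> * x / (1 + x) - 2 * ln (1 + x) - 2 * K * x powr (2/\<alpha>) * ln (1 + x) < 0"
proof -
  define q where "q = (\<lambda>y. \<alpha> * y / ((1+y) * ln (1+y)) - 2 - 2 * K * y powr (2/\<alpha>))"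
  have hq: "\<alpha> * y / (1 + y) - 2 * ln (1 + y) - 2 * K * y powr (2/\<alpha>) * ln (1 + y) = ln (1+y) * q y"
    if "y > 0" for y
  proof -
    have "ln (1+y) > 0" "1 + y > 0" using that by auto
    then have "ln (1+y) * (\<alpha> * y / ((1+y) * ln (1+y))) = \<alpha> * y / (1+y)" by simp
    then show ?thesis unfolding q_def by (simp add: algebra_simps)
  qed
  have "ln (1+\<beta>0) * q \<beta>0 = 0" using hq[OF assms(3)] h0 by linarith
  then have q0: "q \<beta>0 = 0" using assms by simp
  have lx: "ln (1+x) > 0" using assms by simp
  show "x < \<beta>0 \<Longrightarrow> \<alpha> * x / (1 + x) - 2 * ln (1 + x) - 2 * K * x powr (2/\<alpha>) * ln (1 + x) > 0"
  proof -
    assume "x < \<beta>0"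
    then have "q \<beta>0 < q x" unfolding q_def by (intro q_mono) (use assms in auto)
    then show ?thesis using hq[OF assms(4)] q0 lx by simp
  qed
  show "x > \<beta>0 \<Longrightarrow> \<alpha> * x / (1 + x) - 2 * ln (1 + x) - 2 * K * x powr (2/\<alpha>) * ln (1 + x) < 0"
  proof -
    assume "x > \<beta>0"
    then have "q x < q \<beta>0" unfolding q_def by (intro q_mono) (use assms in auto)
    then show ?thesis using hq[OF assms(4)] q0 lx by (simp add: mult_less_0_iff)
  qed
qed

lemma ASE_mono:
  fixes \<alpha> K \<beta>0 u v :: real
  assumes a: "\<alpha> > 2" "K > 0" "\<beta>0 > 0"
    and h0: "- 2 * K * \<beta>0 powr (2 / \<alpha>) * ln (1 + \<beta>0) + \<alpha> * \<beta>0 / (1 + \<beta>0)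
           - 2 * ln (1 + \<beta>0) = 0"
    and uv: "0 < u" "u < v"
  shows "v \<le> \<beta>0 \<Longrightarrow> ASE \<alpha> K u < ASE \<alpha> K v"
    and "\<beta>0 \<le> u \<Longrightarrow> ASE \<alpha> K v < ASE \<alpha> K u"
proof -
  define D where "D = (\<lambda>x. exp (- K * x powr (2/\<alpha>)) * x powr (- 2/\<alpha>) / (x * \<alpha>) *
     (\<alpha> * x / (1 + x) - 2 * ln (1 + x) - 2 * K * x powr (2/\<alpha>) * ln (1 + x)))"
  have dv: "\<And>x. x > 0 \<Longrightarrow> (ASE \<alpha> K has_real_derivative D x) (at x)"
    unfolding D_def using ASE_deriv a(1) by blast
  have c: "continuous_on {u..v} (ASE \<alpha> K)"
  proof (intro continuous_at_imp_continuous_on ballI)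
    fix x assume "x \<in> {u..v}"
    then have "x > 0" using uv by auto
    then show "isCont (ASE \<alpha> K) x" using dv DERIV_isCont by blast
  qed
  have pf: "exp (- K * x powr (2/\<alpha>)) * x powr (- 2/\<alpha>) / (x * \<alpha>) > 0" if "x > 0" for x
    using that a by simp
  show "v \<le> \<beta>0 \<Longrightarrow> ASE \<alpha> K u < ASE \<alpha> K v"
  proof (rule DERIV_pos_imp_increasing_open[OF uv(2) _ c])
    fix x assume "v \<le> \<beta>0" "u < x" "x < v"
    then have "x > 0" "x < \<beta>0" using uv by auto
    then have x: "x > 0" "x < \<beta>0" by auto
    have "D x > 0" unfolding D_def
      by (rule mult_pos_pos[OF pf[OF x(1)] h_sign(1)[OF a(1,2,3) x(1) h0 x(2)]])
    then show "\<exists>y. (ASE \<alpha> K has_real_derivative y) (at x) \<and> y > 0" using dv \<open>x > 0\<close> by blast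
  qed
  show "\<beta>0 \<le> u \<Longrightarrow> ASE \<alpha> K v < ASE \<alpha> K u"
  proof (rule DERIV_neg_imp_decreasing_open[OF uv(2) _ c])
    fix x assume "\<beta>0 \<le> u" "u < x" "x < v"
    then have "x > 0" "x > \<beta>0" using uv by auto
    then have x: "x > 0" "x > \<beta>0" by auto
    have "D x < 0" unfolding D_def
      by (rule mult_pos_neg[OF pf[OF x(1)] h_sign(2)[OF a(1,2,3) x(1) h0 x(2)]])
    then show "\<exists>y. (ASE \<alpha> K has_real_derivative y) (at x) \<and> y < 0" using dv \<open>x > 0\<close> by blast
  qed
qed

theorem proposition3:
  fixes \<alpha> K \<beta>min \<beta>0 :: real
  assumes "\<alpha> > 2" and "K > 0" and "\<beta>min > 0" and "\<beta>0 > 0"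
    and "- 2 * K * \<beta>0 powr (2 / \<alpha>) * ln (1 + \<beta>0) + \<alpha> * \<beta>0 / (1 + \<beta>0)
           - 2 * ln (1 + \<beta>0) = 0"
  shows "max \<beta>0 \<beta>min \<ge> \<beta>min \<and>
         (\<forall>\<beta>. \<beta> \<ge> \<beta>min \<longrightarrow> \<beta> \<noteq> max \<beta>0 \<beta>min \<longrightarrow>
              ASE \<alpha> K \<beta> < ASE \<alpha> K (max \<beta>0 \<beta>min))"
proof -
  have "ASE \<alpha> K \<beta> < ASE \<alpha> K (max \<beta>0 \<beta>min)"
    if b: "\<beta> \<ge> \<beta>min" "\<beta> \<noteq> max \<beta>0 \<beta>min" for \<beta>
  proof (cases "\<beta> < max \<beta>0 \<beta>min")
    case True
    then have "max \<beta>0 \<beta>min = \<beta>0" "\<beta> < \<beta>0" using b by (auto simp: max_def split: if_splits)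
    then show ?thesis using ASE_mono(1)[OF assms(1,2,4,5), of \<beta> \<beta>0] b assms(3) by simp
  next
    case False
    then have "max \<beta>0 \<beta>min < \<beta>" using b by linarith
    then show ?thesis using ASE_mono(2)[OF assms(1,2,4,5), of "max \<beta>0 \<beta>min" \<beta>] assms(3) by simp
  qed
  then show ?thesis by simp
qed

end
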